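(* Let $H=\bigcup_{j=1}^n(c_j,d_j)\subset\mathbb R$ with pairwise disjoint closed intervals $[c_j,d_j]$, let $\mathcal B$ be finite and $m\ge2$. Assume for each $\beta\in\mathcal B$: $b_\beta,\theta_\beta\in C^m(\bar H)$, $b_\beta>0$ on $\bar H$, $\theta_\beta(H)\subset H$; and that there exist $\mu\ge1$ and $\kappa<1$ with $|\theta_\omega(x)-\theta_\omega(y)|\le\kappa|x-y|$ for all $\omega\in\mathcal B_\mu$, $x,y\in\bar H$. Let $M_0=\sup\{|D^2\theta_\beta(x)|:\beta\in\mathcal B,x\in\bar H\}$, $\epsilon_0=1$ and $\epsilon_\nu=\sup\{|\theta_\omega(x)-\theta_\omega(y)|/|x-y|:\omega\in\mathcal B_\nu,\ x,y\in H,\ x\ne y\}$ for $\nu\ge1$. Then for every $k\ge1$, every $\omega\in\mathcal B_k$ and every $x\in\bar H$, $$|D^2\theta_\omega(x)|\le M_0\sum_{j=0}^{k-1}\epsilon_j^2\,\epsilon_{k-j-1}.$$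
   Context: $D=d/dx$. $\mathcal B_\nu=\{(j_1,\ldots,j_\nu):j_k\in\mathcal B\}$ and $\theta_{(j_1,\ldots,j_\nu)}=\theta_{j_\nu}\circ\cdots\circ\theta_{j_1}$. $C^m(\bar H)$ denotes real $C^m$ functions on $H$ whose derivatives of order $\le m$ extend continuously to $\bar H$. *)

theory Defs
  imports "HOL-Analysis.Analysis"
begin

definition union_intervals :: "nat \<Rightarrow> (nat \<Rightarrow> real) \<Rightarrow> (nat \<Rightarrow> real) \<Rightarrow> real set" where
  "union_intervals n c d = (\<Union>j\<in>{1..n}. {c j<..<d j})"

definition Cm_bar :: "nat \<Rightarrow> real set \<Rightarrow> (real \<Rightarrow> real) \<Rightarrow> bool" where
  "Cm_bar m H f \<longleftrightarrow>
     continuous_on (closure H) f \<and>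
     (\<forall>k<m. \<forall>x\<in>H. ((deriv ^^ k) f has_real_derivative (deriv ^^ Suc k) f x) (at x)) \<and>
     (\<forall>k\<le>m. \<exists>g. continuous_on (closure H) g \<and> (\<forall>x\<in>H. g x = (deriv ^^ k) f x))"

text \<open>k-th derivative on closure H: the value at x of the continuous extension of
  the k-th derivative from H.\<close>
definition Dbar :: "real set \<Rightarrow> nat \<Rightarrow> (real \<Rightarrow> real) \<Rightarrow> real \<Rightarrow> real" where
  "Dbar H k f x = Lim (at x within H) ((deriv ^^ k) f)"

text \<open>theta_(j1,...,jnu) = theta_jnu o ... o theta_j1, words given as lists [j1,...,jnu].\<close>
definition theta_word :: "('b \<Rightarrow> real \<Rightarrow> real) \<Rightarrow> 'b list \<Rightarrow> real \<Rightarrow> real" where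
  "theta_word \<theta> \<omega> = fold (\<lambda>j g. \<theta> j \<circ> g) \<omega> id"

definition words :: "'b set \<Rightarrow> nat \<Rightarrow> 'b list set" where
  "words B \<nu> = {\<omega>. length \<omega> = \<nu> \<and> set \<omega> \<subseteq> B}"

definition M0 :: "real set \<Rightarrow> 'b set \<Rightarrow> ('b \<Rightarrow> real \<Rightarrow> real) \<Rightarrow> real" where
  "M0 H B \<theta> = Sup {\<bar>Dbar H 2 (\<theta> \<beta>) x\<bar> | \<beta> x. \<beta> \<in> B \<and> x \<in> closure H}"

definition eps :: "real set \<Rightarrow> 'b set \<Rightarrow> ('b \<Rightarrow> real \<Rightarrow> real) \<Rightarrow> nat \<Rightarrow> real" where
  "eps H B \<theta> \<nu> = (if \<nu> = 0 then 1 else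
     Sup {\<bar>theta_word \<theta> \<omega> x - theta_word \<theta> \<omega> y\<bar> / \<bar>x - y\<bar> | \<omega> x y.
            \<omega> \<in> words B \<nu> \<and> x \<in> H \<and> y \<in> H \<and> x \<noteq> y})"

end

theory Submission imports Defs begin

definition good :: "real set \<Rightarrow> (real \<Rightarrow> real) \<Rightarrow> bool" where
 "good H f \<longleftrightarrow> continuous_on (closure H) f \<and> f ` H \<subseteq> H \<and>
   (\<forall>y\<in>H. (f has_real_derivative deriv f y) (at y) \<and> (deriv f has_real_derivative deriv (deriv f) y) (at y)) \<and>
   (\<exists>g. continuous_on (closure H) g \<and> (\<forall>y\<in>H. g y = deriv f y)) \<and>
   (\<exists>g. continuous_on (closure H) g \<and> (\<forall>y\<in>H. g y = deriv (deriv f) y))"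

lemma deriv_id1: "deriv id y = (1::real)"
  by (rule DERIV_imp_deriv) (simp add: id_def)

lemma deriv_id2: "deriv (deriv id) y = (0::real)"
proof -
  have "deriv id = (\<lambda>_::real. 1::real)" using deriv_id1 by auto
  then show ?thesis by simp
qed

lemma good_id: "good H id"
proof -
  have d: "(id has_real_derivative 1) (at y)" for y :: real by (simp add: id_def)
  have e: "deriv id = (\<lambda>_::real. 1::real)" using deriv_id1 by auto
  have d2: "(deriv id has_real_derivative 0) (at y)" for y :: real by (simp add: e)
  show ?thesis unfolding good_def deriv_id2
    apply (intro conjI)
    apply (simp add: id_def continuous_on_id)
    apply simp
    using d d2 apply (simp add: deriv_id1)
    apply (rule exI[of _ "\<lambda>_. 1"]) apply (simp add: deriv_id1)
    apply (rule exI[of _ "\<lambda>_. 0"]) apply simp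
    done
qed

lemma good_comp_d1:
  assumes "good H f" "good H g" "y \<in> H"
  shows "((f \<circ> g) has_real_derivative deriv f (g y) * deriv g y) (at y)"
    "deriv (f \<circ> g) y = deriv f (g y) * deriv g y"
proof -
  have gy: "g y \<in> H" using assms unfolding good_def by auto
  show 1: "((f \<circ> g) has_real_derivative deriv f (g y) * deriv g y) (at y)"
    apply (rule DERIV_chain) using assms gy unfolding good_def by auto
  show "deriv (f \<circ> g) y = deriv f (g y) * deriv g y"
    using 1 by (rule DERIV_imp_deriv)
qed

lemma good_comp_d2:
  assumes H: "open H" and f: "good H f" and g: "good H g" and y: "y \<in> H"
  shows "(deriv (f \<circ> g) has_real_derivative
      deriv (deriv f) (g y) * (deriv g y)^2 + deriv f (g y) * deriv (deriv g) y) (at y)"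
    "deriv (deriv (f \<circ> g)) y = deriv (deriv f) (g y) * (deriv g y)^2 + deriv f (g y) * deriv (deriv g) y"
proof -
  have gy: "g y \<in> H" using g y unfolding good_def by auto
  have a: "((\<lambda>z. deriv f (g z)) has_real_derivative deriv (deriv f) (g y) * deriv g y) (at y)"
    apply (rule DERIV_chain2[where f="deriv f" and g=g and x=y]) using f g y gy unfolding good_def by auto
  have b: "(deriv g has_real_derivative deriv (deriv g) y) (at y)" using g y unfolding good_def by auto
  have c: "((\<lambda>z. deriv f (g z) * deriv g z) has_real_derivative
     deriv (deriv f) (g y) * deriv g y * deriv g y + deriv f (g y) * deriv (deriv g) y) (at y)"
    using DERIV_mult[OF a b] by (simp add: mult.commute)
  show 1: "(deriv (f \<circ> g) has_real_derivative
      deriv (deriv f) (g y) * (deriv g y)^2 + deriv f (g y) * deriv (deriv g) y) (at y)"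
    apply (rule has_field_derivative_transform_within_open[OF _ H y])
    using c apply (simp add: power2_eq_square mult.assoc)
    using good_comp_d1(2)[OF f g] by simp
  show "deriv (deriv (f \<circ> g)) y = deriv (deriv f) (g y) * (deriv g y)^2 + deriv f (g y) * deriv (deriv g) y"
    using 1 by (rule DERIV_imp_deriv)
qed

lemma good_comp:
  assumes H: "open H" and f: "good H f" and g: "good H g"
  shows "good H (f \<circ> g)"
proof -
  have gcl: "g ` closure H \<subseteq> closure H"
    apply (rule image_closure_subset) using g unfolding good_def by (auto intro: closure_subset[THEN subsetD])
  obtain f1 where f1: "continuous_on (closure H) f1" "\<forall>y\<in>H. f1 y = deriv f y" using f unfolding good_def by blast
  obtain f2 where f2: "continuous_on (closure H) f2" "\<forall>y\<in>H. f2 y = deriv (deriv f) y" using f unfolding good_def by blast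
  obtain g1 where g1: "continuous_on (closure H) g1" "\<forall>y\<in>H. g1 y = deriv g y" using g unfolding good_def by blast
  obtain g2 where g2: "continuous_on (closure H) g2" "\<forall>y\<in>H. g2 y = deriv (deriv g) y" using g unfolding good_def by blast
  have cf: "continuous_on (closure H) f" and cg: "continuous_on (closure H) g" using f g unfolding good_def by auto
  have gH: "g ` H \<subseteq> H" and fH: "f ` H \<subseteq> H" using f g unfolding good_def by auto
  have comp: "continuous_on (closure H) (h \<circ> g)" if "continuous_on (closure H) h" for h
    by (rule continuous_on_compose[OF cg continuous_on_subset[OF that gcl]])
  show ?thesis unfolding good_def
  proof (intro conjI ballI)
    show "continuous_on (closure H) (f \<circ> g)" by (rule comp[OF cf])
    show "(f \<circ> g) ` H \<subseteq> H" using fH gH by auto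
  next
    fix y assume y: "y \<in> H"
    show "(f \<circ> g has_real_derivative deriv (f \<circ> g) y) (at y)"
      using good_comp_d1[OF f g y] by simp
    show "(deriv (f \<circ> g) has_real_derivative deriv (deriv (f \<circ> g)) y) (at y)"
      using good_comp_d2[OF H f g y] by simp
  next
    show "\<exists>h. continuous_on (closure H) h \<and> (\<forall>y\<in>H. h y = deriv (f \<circ> g) y)"
      apply (rule exI[of _ "\<lambda>z. f1 (g z) * g1 z"])
      using comp[OF f1(1)] g1 f1 gH good_comp_d1(2)[OF f g]
      by (auto intro!: continuous_intros simp: o_def image_subset_iff)
    show "\<exists>h. continuous_on (closure H) h \<and> (\<forall>y\<in>H. h y = deriv (deriv (f \<circ> g)) y)"
      apply (rule exI[of _ "\<lambda>z. f2 (g z) * (g1 z)^2 + f1 (g z) * g2 z"])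
      using comp[OF f1(1)] comp[OF f2(1)] g1 g2 f1 f2 gH good_comp_d2(2)[OF H f g]
      by (auto intro!: continuous_intros simp: o_def image_subset_iff)
  qed
qed

lemma tw_Nil[simp]: "theta_word \<theta> [] = id"
  by (simp add: theta_word_def)

lemma fold_comp: fixes \<theta> :: "'c \<Rightarrow> real \<Rightarrow> real" and h :: "real \<Rightarrow> real" shows "fold (\<lambda>j g. \<theta> j \<circ> g) v h = fold (\<lambda>j g. \<theta> j \<circ> g) v id \<circ> h"
proof (induction v arbitrary: h)
  case Nil then show ?case by simp
next
  case (Cons a v)
  show ?case using Cons.IH[of "\<theta> a \<circ> h"] Cons.IH[of "\<theta> a"] by (simp add: o_assoc)
qed

lemma tw_append: "theta_word \<theta> (u @ v) = theta_word \<theta> v \<circ> theta_word \<theta> u"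
  unfolding theta_word_def by (simp only: fold_append o_apply, subst fold_comp, rule refl)

lemma tw_snoc: "theta_word \<theta> (u @ [b]) = \<theta> b \<circ> theta_word \<theta> u"
  by (simp add: tw_append theta_word_def)

lemma good_tw:
  assumes H: "open H" and g: "\<forall>b\<in>set w. good H (\<theta> b)"
  shows "good H (theta_word \<theta> w)"
  using g
proof (induction w rule: rev_induct)
  case Nil then show ?case using good_id[of H] by (simp only: tw_Nil)
next
  case (snoc x xs)
  then show ?case unfolding tw_snoc by (intro good_comp[OF H]) auto
qed

lemma main_ineq:
  assumes H: "open H" and g: "\<forall>b\<in>set w. good H (\<theta> b)"
    and M: "\<forall>b\<in>set w. \<forall>z\<in>H. \<bar>deriv (deriv (\<theta> b)) z\<bar> \<le> M"
    and y: "y \<in> H"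
  shows "\<bar>deriv (deriv (theta_word \<theta> w)) y\<bar> \<le> M * (\<Sum>i<length w.
      (deriv (theta_word \<theta> (take i w)) y)^2 *
      \<bar>deriv (theta_word \<theta> (drop (Suc i) w)) (theta_word \<theta> (take (Suc i) w) y)\<bar>)"
  using g M
proof (induction w rule: rev_induct)
  case Nil
  then show ?case by (simp add: deriv_id2)
next
  case (snoc b w)
  define G where "G = theta_word \<theta> w"
  have gw: "good H G" unfolding G_def by (rule good_tw[OF H]) (use snoc.prems in auto)
  have gb: "good H (\<theta> b)" using snoc.prems by auto
  have gy: "G y \<in> H" using gw y unfolding good_def by auto
  have Mb: "\<bar>deriv (deriv (\<theta> b)) (G y)\<bar> \<le> M" using snoc.prems gy by auto
  have M0: "0 \<le> M" using Mb by linarith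
  define S where "S = (\<Sum>i<length w.
      (deriv (theta_word \<theta> (take i w)) y)^2 *
      \<bar>deriv (theta_word \<theta> (drop (Suc i) w)) (theta_word \<theta> (take (Suc i) w) y)\<bar>)"
  have IH: "\<bar>deriv (deriv G) y\<bar> \<le> M * S" unfolding G_def S_def using snoc.IH snoc.prems by auto
  have S0: "0 \<le> S" unfolding S_def by (intro sum_nonneg) auto
  have eq: "deriv (deriv (theta_word \<theta> (w @ [b]))) y =
     deriv (deriv (\<theta> b)) (G y) * (deriv G y)^2 + deriv (\<theta> b) (G y) * deriv (deriv G) y"
    unfolding tw_snoc G_def[symmetric] by (rule good_comp_d2(2)[OF H gb gw y])
  have trm: "(deriv (theta_word \<theta> (take i (w@[b]))) y)^2 *
      \<bar>deriv (theta_word \<theta> (drop (Suc i) (w@[b]))) (theta_word \<theta> (take (Suc i) (w@[b])) y)\<bar>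
      = \<bar>deriv (\<theta> b) (G y)\<bar> * ((deriv (theta_word \<theta> (take i w)) y)^2 *
      \<bar>deriv (theta_word \<theta> (drop (Suc i) w)) (theta_word \<theta> (take (Suc i) w) y)\<bar>)"
    if i: "i < length w" for i
  proof -
    define T where "T = theta_word \<theta> (take (Suc i) w)"
    define D where "D = theta_word \<theta> (drop (Suc i) w)"
    have gT: "good H T" unfolding T_def
      by (rule good_tw[OF H]) (use snoc.prems in \<open>auto dest: in_set_takeD\<close>)
    have gD: "good H D" unfolding D_def
      by (rule good_tw[OF H]) (use snoc.prems in \<open>auto dest: in_set_dropD\<close>)
    have Ty: "T y \<in> H" using gT y unfolding good_def by auto
    have DT: "D (T y) = G y" unfolding D_def T_def G_def
      using tw_append[of \<theta> "take (Suc i) w" "drop (Suc i) w"] by simp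
    have "deriv (theta_word \<theta> (drop (Suc i) w @ [b])) (T y) = deriv (\<theta> b) (G y) * deriv D (T y)"
      unfolding tw_snoc D_def[symmetric] using good_comp_d1(2)[OF gb gD Ty] DT by simp
    then show ?thesis using i unfolding T_def D_def by (simp add: abs_mult)
  qed
  have Snew: "(\<Sum>i<length (w@[b]).
      (deriv (theta_word \<theta> (take i (w@[b]))) y)^2 *
      \<bar>deriv (theta_word \<theta> (drop (Suc i) (w@[b]))) (theta_word \<theta> (take (Suc i) (w@[b])) y)\<bar>)
      = \<bar>deriv (\<theta> b) (G y)\<bar> * S + (deriv G y)^2"
  proof -
    have a: "(\<Sum>i<length (w@[b]).
      (deriv (theta_word \<theta> (take i (w@[b]))) y)^2 *
      \<bar>deriv (theta_word \<theta> (drop (Suc i) (w@[b]))) (theta_word \<theta> (take (Suc i) (w@[b])) y)\<bar>)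
      = (\<Sum>i<length w.
      (deriv (theta_word \<theta> (take i (w@[b]))) y)^2 *
      \<bar>deriv (theta_word \<theta> (drop (Suc i) (w@[b]))) (theta_word \<theta> (take (Suc i) (w@[b])) y)\<bar>)
      + (deriv (theta_word \<theta> (take (length w) (w@[b]))) y)^2 *
      \<bar>deriv (theta_word \<theta> (drop (Suc (length w)) (w@[b]))) (theta_word \<theta> (take (Suc (length w)) (w@[b])) y)\<bar>"
      by (simp only: length_append_singleton sum.lessThan_Suc)
    have b: "(\<Sum>i<length w.
      (deriv (theta_word \<theta> (take i (w@[b]))) y)^2 *
      \<bar>deriv (theta_word \<theta> (drop (Suc i) (w@[b]))) (theta_word \<theta> (take (Suc i) (w@[b])) y)\<bar>)
      = \<bar>deriv (\<theta> b) (G y)\<bar> * S"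
      unfolding S_def sum_distrib_left by (rule sum.cong[OF refl], rule trm, simp)
    have c: "(deriv (theta_word \<theta> (take (length w) (w@[b]))) y)^2 *
      \<bar>deriv (theta_word \<theta> (drop (Suc (length w)) (w@[b]))) (theta_word \<theta> (take (Suc (length w)) (w@[b])) y)\<bar>
       = (deriv G y)^2"
      unfolding G_def by (simp add: deriv_id1)
    show ?thesis unfolding a b c ..
  qed
  have "\<bar>deriv (deriv (theta_word \<theta> (w @ [b]))) y\<bar> \<le>
      \<bar>deriv (deriv (\<theta> b)) (G y)\<bar> * (deriv G y)^2 + \<bar>deriv (\<theta> b) (G y)\<bar> * \<bar>deriv (deriv G) y\<bar>"
    unfolding eq by (rule order_trans[OF abs_triangle_ineq]) (simp add: abs_mult)
  also have "\<dots> \<le> M * (deriv G y)^2 + \<bar>deriv (\<theta> b) (G y)\<bar> * (M * S)"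
    by (intro add_mono mult_mono Mb IH) (auto simp: M0)
  also have "\<dots> = M * (\<bar>deriv (\<theta> b) (G y)\<bar> * S + (deriv G y)^2)" by (simp add: algebra_simps)
  finally show ?case unfolding Snew .
qed

lemma funpow2: "(deriv ^^ 2) f = deriv (deriv f)"
  by (simp add: numeral_2_eq_2)

lemma Dbar_eq:
  assumes H: "open H" and f: "good H f"
  obtains g where "continuous_on (closure H) g" "\<forall>y\<in>H. g y = deriv (deriv f) y"
    "\<forall>x\<in>closure H. Dbar H 2 f x = g x"
proof -
  obtain g where g: "continuous_on (closure H) g" "\<forall>y\<in>H. g y = deriv (deriv f) y"
    using f unfolding good_def by blast
  have "Dbar H 2 f x = g x" if x: "x \<in> closure H" for x
  proof -
    have "(g \<longlongrightarrow> g x) (at x within closure H)"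
      using g(1) x unfolding continuous_on_def by blast
    then have "(g \<longlongrightarrow> g x) (at x within H)"
      by (rule tendsto_mono[rotated]) (simp add: at_le closure_subset)
    then have t: "(deriv (deriv f) \<longlongrightarrow> g x) (at x within H)"
      by (rule Lim_transform_eventually) (use g(2) in \<open>auto simp: eventually_at_filter\<close>)
    have "x islimpt H"
    proof (cases "x \<in> H")
      case True then show ?thesis by (rule open_imp_islimpt[OF H])
    next
      case False then show ?thesis using x unfolding closure_def by auto
    qed
    then have nt: "\<not> trivial_limit (at x within H)" by (simp add: trivial_limit_within)
    show ?thesis unfolding Dbar_def funpow2 by (rule tendsto_Lim[OF nt t])
  qed
  then show ?thesis using that g by blast
qed

lemma Dbar_bound:
  assumes H: "open H" and f: "good H f" and x: "x \<in> closure H"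
    and C: "\<forall>y\<in>H. \<bar>deriv (deriv f) y\<bar> \<le> C"
  shows "\<bar>Dbar H 2 f x\<bar> \<le> C"
proof -
  obtain g where g: "continuous_on (closure H) g" "\<forall>y\<in>H. g y = deriv (deriv f) y"
    "\<forall>x\<in>closure H. Dbar H 2 f x = g x" by (rule Dbar_eq[OF H f])
  have "g ` closure H \<subseteq> {t. \<bar>t\<bar> \<le> C}"
    apply (rule image_closure_subset[OF g(1)])
    apply (subgoal_tac "{t::real. \<bar>t\<bar> \<le> C} = cball 0 C", simp)
    apply (auto simp: cball_def dist_real_def)[1]
    using g(2) C by auto
  then show ?thesis using x g(3) by auto
qed

lemma Dbar_in:
  assumes H: "open H" and f: "good H f" and y: "y \<in> H"
  shows "Dbar H 2 f y = deriv (deriv f) y"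
proof -
  obtain g where g: "continuous_on (closure H) g" "\<forall>y\<in>H. g y = deriv (deriv f) y"
    "\<forall>x\<in>closure H. Dbar H 2 f x = g x" by (rule Dbar_eq[OF H f])
  then show ?thesis by (metis y closure_subset subsetD)
qed

lemma cont_bounded:
  fixes H :: "real set" and g :: "real \<Rightarrow> real"
  assumes "bounded H" "continuous_on (closure H) g"
  shows "\<exists>L. \<forall>z\<in>closure H. \<bar>g z\<bar> \<le> L"
proof -
  have "compact (g ` closure H)"
    by (rule compact_continuous_image[OF assms(2)]) (simp add: assms(1))
  then have "bounded (g ` closure H)" by (rule compact_imp_bounded)
  then show ?thesis unfolding bounded_real by auto
qed

lemma Dbar_bounded:
  assumes H: "open H" "bounded H" and f: "good H f"
  shows "\<exists>L. \<forall>z\<in>closure H. \<bar>Dbar H 2 f z\<bar> \<le> L"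
proof -
  obtain g where g: "continuous_on (closure H) g" "\<forall>y\<in>H. g y = deriv (deriv f) y"
    "\<forall>x\<in>closure H. Dbar H 2 f x = g x" by (rule Dbar_eq[OF H(1) f])
  obtain L where "\<forall>z\<in>closure H. \<bar>g z\<bar> \<le> L" using cont_bounded[OF H(2) g(1)] by blast
  then show ?thesis using g(3) by auto
qed

lemma finite_bdd:
  fixes F :: "'b \<Rightarrow> 'x \<Rightarrow> real"
  assumes "finite B" "\<forall>b\<in>B. \<exists>L. \<forall>z\<in>S b. F b z \<le> L"
  shows "bdd_above {F b z | b z. b \<in> B \<and> z \<in> S b}"
proof -
  obtain L where L: "\<forall>b\<in>B. \<forall>z\<in>S b. F b z \<le> L b" using assms(2) by metis
  have "F b z \<le> (\<Sum>b\<in>B. \<bar>L b\<bar>)" if "b \<in> B" "z \<in> S b" for b z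
  proof -
    have "F b z \<le> \<bar>L b\<bar>" using L that by force
    also have "\<dots> \<le> (\<Sum>b\<in>B. \<bar>L b\<bar>)" by (rule member_le_sum) (use that assms(1) in auto)
    finally show ?thesis .
  qed
  then show ?thesis unfolding bdd_above_def by blast
qed

lemma finite_delta:
  fixes P :: "'i \<Rightarrow> real \<Rightarrow> bool"
  assumes "finite I" "\<forall>i\<in>I. \<exists>\<delta>>0. P i \<delta>"
    and mono: "\<And>i \<delta> \<delta>'. P i \<delta> \<Longrightarrow> 0 < \<delta>' \<Longrightarrow> \<delta>' \<le> \<delta> \<Longrightarrow> P i \<delta>'"
  shows "\<exists>\<delta>>0. \<forall>i\<in>I. P i \<delta>"
  using assms(1,2)
proof (induction I rule: finite_induct)
  case empty then show ?case by (auto intro: exI[of _ 1])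
next
  case (insert a I)
  obtain d1 where d1: "d1 > 0" "\<forall>i\<in>I. P i d1" using insert by auto
  obtain d2 where d2: "d2 > 0" "P a d2" using insert by auto
  show ?case
    apply (rule exI[of _ "min d1 d2"])
    using d1 d2 by (auto intro: mono)
qed

lemma H_open: "open (union_intervals n c d)"
  unfolding union_intervals_def by (intro open_UN) auto

lemma H_bounded: "bounded (union_intervals n c d)"
  unfolding union_intervals_def by (intro bounded_UN) auto

lemma quot_bound:
  assumes H: "H = union_intervals n c d"
    and disj: "\<forall>i\<in>{1..n}. \<forall>j\<in>{1..n}. i \<noteq> j \<longrightarrow> {c i..d i} \<inter> {c j..d j} = {}"
    and f: "good H f"
  shows "\<exists>L. \<forall>x\<in>H. \<forall>y\<in>H. x \<noteq> y \<longrightarrow> \<bar>f x - f y\<bar> / \<bar>x - y\<bar> \<le> L"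
proof -
  have bH: "bounded H" using H H_bounded by simp
  obtain g1 where g1: "continuous_on (closure H) g1" "\<forall>y\<in>H. g1 y = deriv f y"
    using f unfolding good_def by blast
  have cf: "continuous_on (closure H) f" using f unfolding good_def by blast
  obtain L1 where L1: "\<forall>z\<in>closure H. \<bar>g1 z\<bar> \<le> L1" using cont_bounded[OF bH g1(1)] by blast
  obtain L0 where L0: "\<forall>z\<in>closure H. \<bar>f z\<bar> \<le> L0" using cont_bounded[OF bH cf] by blast
  have "\<forall>ij\<in>{1..n}\<times>{1..n}. \<exists>\<delta>>0. (\<lambda>ij \<delta>. fst ij \<noteq> snd ij \<longrightarrow>
      (\<forall>x\<in>{c (fst ij)..d (fst ij)}. \<forall>y\<in>{c (snd ij)..d (snd ij)}. \<delta> \<le> \<bar>x - y\<bar>)) ij \<delta>"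
  proof
    fix ij assume ij: "ij \<in> {1..n}\<times>{1..n}"
    obtain i j where ijd: "ij = (i,j)" by force
    show "\<exists>\<delta>>0. (\<lambda>ij \<delta>. fst ij \<noteq> snd ij \<longrightarrow>
      (\<forall>x\<in>{c (fst ij)..d (fst ij)}. \<forall>y\<in>{c (snd ij)..d (snd ij)}. \<delta> \<le> \<bar>x - y\<bar>)) ij \<delta>"
    proof (cases "i = j")
      case True then show ?thesis using ijd by (auto intro: exI[of _ 1])
    next
      case False
      then have "{c i..d i} \<inter> {c j..d j} = {}" using disj ij ijd by auto
      then obtain \<delta> where "\<delta> > 0" "\<forall>x\<in>{c i..d i}. \<forall>y\<in>{c j..d j}. \<delta> \<le> dist x y"
        using separate_compact_closed[of "{c i..d i}" "{c j..d j}"] by auto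
      then show ?thesis using ijd by (auto simp: dist_real_def)
    qed
  qed
  from finite_delta[OF _ this] obtain \<delta> where \<delta>: "\<delta> > 0"
    "\<forall>i\<in>{1..n}. \<forall>j\<in>{1..n}. i \<noteq> j \<longrightarrow> (\<forall>x\<in>{c i..d i}. \<forall>y\<in>{c j..d j}. \<delta> \<le> \<bar>x - y\<bar>)"
    by fastforce
  have same: "\<bar>f y - f x\<bar> \<le> L1 * (y - x)" if "x < y" "x \<in> {c i<..<d i}" "y \<in> {c i<..<d i}" "i \<in> {1..n}" for x y i
  proof -
    have sub: "z \<in> H" if "x \<le> z" "z \<le> y" for z
    proof -
      have "z \<in> {c i<..<d i}" using \<open>x \<in> {c i<..<d i}\<close> \<open>y \<in> {c i<..<d i}\<close> that by auto
      then show ?thesis unfolding H union_intervals_def using \<open>i \<in> {1..n}\<close> by (rule UN_I[rotated])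
    qed
    obtain z where z: "x < z" "z < y" "f y - f x = (y - x) * deriv f z"
      using MVT2[OF \<open>x < y\<close>, of f "deriv f"] sub f unfolding good_def by blast
    have "z \<in> H" using sub z by auto
    then have "\<bar>deriv f z\<bar> \<le> L1" using L1 g1(2) closure_subset[of H] by (metis subsetD)
    then show ?thesis using z \<open>x < y\<close> by (simp add: abs_mult mult.commute mult_left_mono)
  qed
  show ?thesis
  proof (intro exI[of _ "max L1 (2 * L0 / \<delta>)"] ballI impI)
    fix x y assume x: "x \<in> H" and y: "y \<in> H" and xy: "x \<noteq> y"
    obtain i where i: "i \<in> {1..n}" "x \<in> {c i<..<d i}" using x unfolding H union_intervals_def by auto
    obtain j where j: "j \<in> {1..n}" "y \<in> {c j<..<d j}" using y unfolding H union_intervals_def by auto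
    have pos: "0 < \<bar>x - y\<bar>" using xy by auto
    show "\<bar>f x - f y\<bar> / \<bar>x - y\<bar> \<le> max L1 (2 * L0 / \<delta>)"
    proof (cases "i = j")
      case True
      have "\<bar>f x - f y\<bar> \<le> L1 * \<bar>x - y\<bar>"
      proof (cases "x < y")
        case True then show ?thesis using same[of x y i] i j \<open>i = j\<close> by (simp add: abs_minus_commute)
      next
        case False then have "y < x" using xy by auto
        then show ?thesis using same[of y x i] i j \<open>i = j\<close> by simp
      qed
      then have "\<bar>f x - f y\<bar> / \<bar>x - y\<bar> \<le> L1" using pos by (simp add: divide_le_eq)
      then show ?thesis by linarith
    next
      case False
      have fx: "\<bar>f x\<bar> \<le> L0" and fy: "\<bar>f y\<bar> \<le> L0" using L0 x y closure_subset[of H] by (metis subsetD)+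
      have L0p: "0 \<le> L0" using fx by linarith
      have d: "\<delta> \<le> \<bar>x - y\<bar>" using \<delta>(2) i j False by auto
      have "\<bar>f x - f y\<bar> \<le> 2 * L0" using fx fy by linarith
      then have "\<bar>f x - f y\<bar> / \<bar>x - y\<bar> \<le> 2 * L0 / \<bar>x - y\<bar>" using pos by (simp add: divide_right_mono)
      also have "\<dots> \<le> 2 * L0 / \<delta>" using d \<delta>(1) L0p by (intro divide_left_mono) auto
      finally show ?thesis by linarith
    qed
  qed
qed

lemma finite_words: "finite B \<Longrightarrow> finite (words B \<nu>)"
proof -
  assume "finite B"
  have "words B \<nu> = {xs. set xs \<subseteq> B \<and> length xs = \<nu>}" unfolding words_def by auto
  then show ?thesis using finite_lists_length_eq[OF \<open>finite B\<close>] by simp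
qed

lemma deriv_le_eps:
  assumes fin: "finite B" and nu: "\<nu> \<ge> 1" and w: "w \<in> words B \<nu>" and H: "open H" and y: "y \<in> H"
    and Lq: "\<forall>w\<in>words B \<nu>. \<exists>L. \<forall>x\<in>H. \<forall>y\<in>H. x \<noteq> y \<longrightarrow>
          \<bar>theta_word \<theta> w x - theta_word \<theta> w y\<bar> / \<bar>x - y\<bar> \<le> L"
    and D: "(theta_word \<theta> w has_real_derivative D) (at y)"
  shows "\<bar>D\<bar> \<le> eps H B \<theta> \<nu>"
proof -
  define Q where "Q = {\<bar>theta_word \<theta> \<omega> x - theta_word \<theta> \<omega> y\<bar> / \<bar>x - y\<bar> | \<omega> x y.
            \<omega> \<in> words B \<nu> \<and> x \<in> H \<and> y \<in> H \<and> x \<noteq> y}"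
  have epsQ: "eps H B \<theta> \<nu> = Sup Q" unfolding eps_def Q_def using nu by simp
  obtain L where L: "\<forall>w\<in>words B \<nu>. \<forall>x\<in>H. \<forall>y\<in>H. x \<noteq> y \<longrightarrow>
          \<bar>theta_word \<theta> w x - theta_word \<theta> w y\<bar> / \<bar>x - y\<bar> \<le> L w"
    using Lq by metis
  have bdd: "bdd_above Q"
  proof -
    have "q \<le> (\<Sum>w\<in>words B \<nu>. \<bar>L w\<bar>)" if "q \<in> Q" for q
    proof -
      obtain \<omega> x y where q: "q = \<bar>theta_word \<theta> \<omega> x - theta_word \<theta> \<omega> y\<bar> / \<bar>x - y\<bar>"
        "\<omega> \<in> words B \<nu>" "x \<in> H" "y \<in> H" "x \<noteq> y" using \<open>q \<in> Q\<close> unfolding Q_def by blast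
      have "q \<le> \<bar>L \<omega>\<bar>" using L q by force
      also have "\<dots> \<le> (\<Sum>w\<in>words B \<nu>. \<bar>L w\<bar>)"
        by (rule member_le_sum) (use q(2) finite_words[OF fin] in auto)
      finally show ?thesis .
    qed
    then show ?thesis unfolding bdd_above_def by blast
  qed
  obtain e where e: "e > 0" "ball y e \<subseteq> H" using H y openE by blast
  have lim: "((\<lambda>h. \<bar>(theta_word \<theta> w (y + h) - theta_word \<theta> w y) / h\<bar>) \<longlongrightarrow> \<bar>D\<bar>) (at 0)"
    using D unfolding DERIV_def by (rule tendsto_rabs)
  have ev: "eventually (\<lambda>h. \<bar>(theta_word \<theta> w (y + h) - theta_word \<theta> w y) / h\<bar> \<le> Sup Q) (at 0)"
    unfolding eventually_at
  proof (intro exI[of _ e] conjI ballI impI allI)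
    show "e > 0" by fact
    fix h :: real assume h: "h \<noteq> 0 \<and> dist h 0 < e"
    have yh: "y + h \<in> H" using e(2) h by (auto simp: dist_real_def)
    have "\<bar>(theta_word \<theta> w (y + h) - theta_word \<theta> w y) / h\<bar> \<in> Q"
    proof -
      have "\<bar>(theta_word \<theta> w (y + h) - theta_word \<theta> w y) / h\<bar> =
        \<bar>theta_word \<theta> w (y + h) - theta_word \<theta> w y\<bar> / \<bar>(y + h) - y\<bar>" by (simp add: abs_divide)
      moreover have "y + h \<noteq> y" using h by auto
      ultimately show ?thesis unfolding Q_def using w yh y by blast
    qed
    then show "\<bar>(theta_word \<theta> w (y + h) - theta_word \<theta> w y) / h\<bar> \<le> Sup Q"
      using bdd by (rule cSup_upper)
  qed
  have "\<bar>D\<bar> \<le> Sup Q" by (rule tendsto_upperbound[OF lim ev]) simp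
  then show ?thesis using epsQ by simp
qed

lemma Cm_good:
  assumes "Cm_bar m H f" "m \<ge> 2" "f ` H \<subseteq> H"
  shows "good H f"
proof -
  have c: "continuous_on (closure H) f"
    and d: "\<forall>k<m. \<forall>x\<in>H. ((deriv ^^ k) f has_real_derivative (deriv ^^ Suc k) f x) (at x)"
    and e: "\<forall>k\<le>m. \<exists>g. continuous_on (closure H) g \<and> (\<forall>x\<in>H. g x = (deriv ^^ k) f x)"
    using assms(1) unfolding Cm_bar_def by auto
  have d0: "\<forall>x\<in>H. (f has_real_derivative deriv f x) (at x)" using d[rule_format, of 0] assms(2) by simp
  have d1: "\<forall>x\<in>H. (deriv f has_real_derivative deriv (deriv f) x) (at x)" using d[rule_format, of 1] assms(2) by simp
  have e1: "\<exists>g. continuous_on (closure H) g \<and> (\<forall>x\<in>H. g x = deriv f x)" using e[rule_format, of 1] assms(2) by simp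
  have e2: "\<exists>g. continuous_on (closure H) g \<and> (\<forall>x\<in>H. g x = deriv (deriv f) x)"
    using e[rule_format, of 2] assms(2) by (simp add: funpow2)
  show ?thesis unfolding good_def using c d0 d1 e1 e2 assms(3) by blast
qed

lemma deriv_abs_le_eps:
  assumes H: "H = union_intervals n c d"
    and disj: "\<forall>i\<in>{1..n}. \<forall>j\<in>{1..n}. i \<noteq> j \<longrightarrow> {c i..d i} \<inter> {c j..d j} = {}"
    and fin: "finite B" and g: "\<forall>b\<in>B. good H (\<theta> b)"
    and u: "set u \<subseteq> B" and y: "y \<in> H"
  shows "\<bar>deriv (theta_word \<theta> u) y\<bar> \<le> eps H B \<theta> (length u)"
proof (cases "u = []")
  case True
  have "theta_word \<theta> u = id" using True by (simp only: tw_Nil)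
  then have 1: "deriv (theta_word \<theta> u) y = 1" by (simp only: deriv_id1)
  have 2: "eps H B \<theta> (length u) = 1" using True unfolding eps_def by simp
  show ?thesis unfolding 1 2 by simp
next
  case False
  have oH: "open H" using H H_open by simp
  have gw: "good H (theta_word \<theta> w)" if "set w \<subseteq> B" for w
    by (rule good_tw[OF oH]) (use g that in blast)
  have Lq: "\<forall>w\<in>words B (length u). \<exists>L. \<forall>x\<in>H. \<forall>y\<in>H. x \<noteq> y \<longrightarrow>
          \<bar>theta_word \<theta> w x - theta_word \<theta> w y\<bar> / \<bar>x - y\<bar> \<le> L"
  proof
    fix w assume "w \<in> words B (length u)"
    then have "set w \<subseteq> B" unfolding words_def by auto
    then show "\<exists>L. \<forall>x\<in>H. \<forall>y\<in>H. x \<noteq> y \<longrightarrow>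
          \<bar>theta_word \<theta> w x - theta_word \<theta> w y\<bar> / \<bar>x - y\<bar> \<le> L"
      by (rule quot_bound[OF H disj gw])
  qed
  have D: "(theta_word \<theta> u has_real_derivative deriv (theta_word \<theta> u) y) (at y)"
    using gw[OF u] y unfolding good_def by blast
  have "length u \<ge> 1" using False by (cases u) auto
  moreover have "u \<in> words B (length u)" using u by (simp add: words_def)
  ultimately show ?thesis
    by (rule deriv_le_eps[OF fin _ _ oH y Lq D])
qed

theorem lemma6p2:
  fixes n :: nat and c d :: "nat \<Rightarrow> real" and B :: "'b set" and m :: nat
    and b \<theta> :: "'b \<Rightarrow> real \<Rightarrow> real" and H :: "real set"
  assumes H_def: "H = union_intervals n c d"
    and cd: "\<forall>j\<in>{1..n}. c j < d j"
    and disj: "\<forall>i\<in>{1..n}. \<forall>j\<in>{1..n}. i \<noteq> j \<longrightarrow> {c i..d i} \<inter> {c j..d j} = {}"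
    and finB: "finite B"
    and m2: "m \<ge> 2"
    and b_reg: "\<forall>\<beta>\<in>B. Cm_bar m H (b \<beta>)"
    and theta_reg: "\<forall>\<beta>\<in>B. Cm_bar m H (\<theta> \<beta>)"
    and b_pos: "\<forall>\<beta>\<in>B. \<forall>x\<in>closure H. b \<beta> x > 0"
    and theta_maps: "\<forall>\<beta>\<in>B. \<theta> \<beta> ` H \<subseteq> H"
    and contr: "\<exists>\<mu>::nat. \<exists>\<kappa>::real. \<mu> \<ge> 1 \<and> \<kappa> < 1 \<and>
       (\<forall>\<omega>\<in>words B \<mu>. \<forall>x\<in>closure H. \<forall>y\<in>closure H.
          \<bar>theta_word \<theta> \<omega> x - theta_word \<theta> \<omega> y\<bar> \<le> \<kappa> * \<bar>x - y\<bar>)"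
  shows "\<forall>k\<ge>1. \<forall>\<omega>\<in>words B k. \<forall>x\<in>closure H.
           \<bar>Dbar H 2 (theta_word \<theta> \<omega>) x\<bar>
             \<le> M0 H B \<theta> * (\<Sum>j<k. (eps H B \<theta> j)\<^sup>2 * eps H B \<theta> (k - j - 1))"
proof (intro allI impI ballI)
  fix k :: nat and \<omega> x
  assume k: "k \<ge> 1" and w: "\<omega> \<in> words B k" and x: "x \<in> closure H"
  have oH: "open H" using H_def H_open by simp
  have bH: "bounded H" using H_def H_bounded by simp
  have g: "\<forall>\<beta>\<in>B. good H (\<theta> \<beta>)"
  proof
    fix \<beta> assume "\<beta> \<in> B"
    then show "good H (\<theta> \<beta>)" using theta_reg theta_maps m2 by (intro Cm_good) auto
  qed
  have wB: "set \<omega> \<subseteq> B" and wl: "length \<omega> = k" using w unfolding words_def by auto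
  have bdd: "bdd_above {\<bar>Dbar H 2 (\<theta> \<beta>) x\<bar> | \<beta> x. \<beta> \<in> B \<and> x \<in> closure H}"
  proof -
    have "\<forall>\<beta>\<in>B. \<exists>L. \<forall>z\<in>closure H. \<bar>Dbar H 2 (\<theta> \<beta>) z\<bar> \<le> L"
    proof
      fix \<beta> assume "\<beta> \<in> B"
      then have "good H (\<theta> \<beta>)" using g by blast
      then show "\<exists>L. \<forall>z\<in>closure H. \<bar>Dbar H 2 (\<theta> \<beta>) z\<bar> \<le> L" by (rule Dbar_bounded[OF oH bH])
    qed
    from finite_bdd[OF finB this] show ?thesis .
  qed
  have Mb: "\<forall>\<beta>\<in>set \<omega>. \<forall>z\<in>H. \<bar>deriv (deriv (\<theta> \<beta>)) z\<bar> \<le> M0 H B \<theta>"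
  proof (intro ballI)
    fix \<beta> z assume \<beta>: "\<beta> \<in> set \<omega>" and z: "z \<in> H"
    have \<beta>B: "\<beta> \<in> B" using \<beta> wB by auto
    have "\<bar>deriv (deriv (\<theta> \<beta>)) z\<bar> = \<bar>Dbar H 2 (\<theta> \<beta>) z\<bar>"
      using Dbar_in[OF oH _ z] g \<beta>B by simp
    also have "\<dots> \<le> M0 H B \<theta>" unfolding M0_def
      apply (rule cSup_upper[OF _ bdd])
      using \<beta>B z closure_subset[of H] by blast
    finally show "\<bar>deriv (deriv (\<theta> \<beta>)) z\<bar> \<le> M0 H B \<theta>" .
  qed
  have gw: "good H (theta_word \<theta> \<omega>)" by (rule good_tw[OF oH]) (use g wB in blast)
  show "\<bar>Dbar H 2 (theta_word \<theta> \<omega>) x\<bar>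
             \<le> M0 H B \<theta> * (\<Sum>j<k. (eps H B \<theta> j)\<^sup>2 * eps H B \<theta> (k - j - 1))"
  proof (rule Dbar_bound[OF oH gw x], intro ballI)
    fix y assume y: "y \<in> H"
    obtain \<beta> where \<beta>: "\<beta> \<in> set \<omega>" using k wl by (cases \<omega>) auto
    have "\<bar>deriv (deriv (\<theta> \<beta>)) y\<bar> \<le> M0 H B \<theta>" using Mb \<beta> y by blast
    then have M0p: "0 \<le> M0 H B \<theta>" by linarith
    have "\<bar>deriv (deriv (theta_word \<theta> \<omega>)) y\<bar> \<le> M0 H B \<theta> * (\<Sum>i<length \<omega>.
      (deriv (theta_word \<theta> (take i \<omega>)) y)^2 *
      \<bar>deriv (theta_word \<theta> (drop (Suc i) \<omega>)) (theta_word \<theta> (take (Suc i) \<omega>) y)\<bar>)"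
      by (rule main_ineq[OF oH _ Mb y]) (use g wB in auto)
    also have "\<dots> \<le> M0 H B \<theta> * (\<Sum>j<k. (eps H B \<theta> j)\<^sup>2 * eps H B \<theta> (k - j - 1))"
    proof (rule mult_left_mono[OF _ M0p], unfold wl, rule sum_mono)
      fix i assume i: "i \<in> {..<k}"
      have tB: "set (take i \<omega>) \<subseteq> B" using wB by (meson in_set_takeD subset_iff)
      have dB: "set (drop (Suc i) \<omega>) \<subseteq> B" using wB by (meson in_set_dropD subset_iff)
      have tS: "good H (theta_word \<theta> (take (Suc i) \<omega>))"
        by (rule good_tw[OF oH]) (use g wB in \<open>meson in_set_takeD subset_iff\<close>)
      have ty: "theta_word \<theta> (take (Suc i) \<omega>) y \<in> H" using tS y unfolding good_def by auto
      have a: "\<bar>deriv (theta_word \<theta> (take i \<omega>)) y\<bar> \<le> eps H B \<theta> i"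
        using deriv_abs_le_eps[OF H_def disj finB g tB y] i wl by simp
      have b: "\<bar>deriv (theta_word \<theta> (drop (Suc i) \<omega>)) (theta_word \<theta> (take (Suc i) \<omega>) y)\<bar>
          \<le> eps H B \<theta> (k - i - 1)"
        using deriv_abs_le_eps[OF H_def disj finB g dB ty] wl by simp
      have a2: "(deriv (theta_word \<theta> (take i \<omega>)) y)^2 \<le> (eps H B \<theta> i)^2"
        using power_mono[OF a, of 2] by simp
      show "(deriv (theta_word \<theta> (take i \<omega>)) y)^2 *
        \<bar>deriv (theta_word \<theta> (drop (Suc i) \<omega>)) (theta_word \<theta> (take (Suc i) \<omega>) y)\<bar>
        \<le> (eps H B \<theta> i)\<^sup>2 * eps H B \<theta> (k - i - 1)"
        by (rule mult_mono[OF a2 b]) auto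
    qed
    finally show "\<bar>deriv (deriv (theta_word \<theta> \<omega>)) y\<bar>
      \<le> M0 H B \<theta> * (\<Sum>j<k. (eps H B \<theta> j)\<^sup>2 * eps H B \<theta> (k - j - 1))" .
  qed
qed

end
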